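(* Let $M$ and $N$ be $n$-manifolds with bounded geometry and let $(f_j)$ be a sequence of $R$-uniformly $k$-to-one $L$-LQ-mappings $M\to N$ converging locally uniformly to a continuous mapping $f\colon M\to N$. Then $f$ is an $R$-uniformly $k$-to-one $L$-LQ-mapping.
   Context: A metric manifold $M$ has bounded geometry if it is a complete length space and there exist $C\ge1$, $R_0>0$ such that for every $x\in M$ there is a $C$-bilipschitz map $B_M(x,R_0)\to B_{\mathbb{R}^n}(0,R_0)$; $B_X(x,r)$ denotes the open ball. A map $f\colon M\to N$ is an $L$-LQ-mapping if $B_N(f(x),L^{-1}r)\subset f(B_M(x,r))\subset B_N(f(x),Lr)$ for all $x\in M$, $r>0$. A map $f\colon X\to Y$ is $R$-uniformly $k$-to-one if $\#\big(f^{-1}\{f(x)\}\cap B_X(x,R)\big)\le k$ for all $x\in X$. *)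

theory Defs
  imports "HOL-Analysis.Analysis"
begin

definition curve_length :: "(real \<Rightarrow> 'a::metric_space) \<Rightarrow> ereal" where
  "curve_length \<gamma> =
     (SUP p \<in> {(m, t). t 0 = (0::real) \<and> t m = 1 \<and> (\<forall>i<m. t i \<le> t (Suc i))}.
        ereal (\<Sum>i<fst p. dist (\<gamma> (snd p i)) (\<gamma> (snd p (Suc i)))))"

definition length_space :: "'a::metric_space itself \<Rightarrow> bool" where
  "length_space _ \<longleftrightarrow>
     (\<forall>x y::'a. ereal (dist x y) =
        (INF \<gamma> \<in> {\<gamma>. continuous_on {0..1} \<gamma> \<and> \<gamma> 0 = x \<and> \<gamma> 1 = y}. curve_length \<gamma>))"

definition bilipschitz_on :: "real \<Rightarrow> 'a::metric_space set \<Rightarrow> ('a \<Rightarrow> 'b::metric_space) \<Rightarrow> bool" where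
  "bilipschitz_on C S \<phi> \<longleftrightarrow>
     (\<forall>a\<in>S. \<forall>b\<in>S. dist a b / C \<le> dist (\<phi> a) (\<phi> b) \<and> dist (\<phi> a) (\<phi> b) \<le> C * dist a b)"

definition topological_manifold :: "'a::metric_space itself \<Rightarrow> 'e::euclidean_space itself \<Rightarrow> bool" where
  "topological_manifold _ _ \<longleftrightarrow>
     (\<forall>x::'a. \<exists>U (V::'e set) \<phi> \<psi>. open U \<and> x \<in> U \<and> open V \<and> homeomorphism U V \<phi> \<psi>)"

definition bounded_geometry :: "'a::metric_space itself \<Rightarrow> 'e::euclidean_space itself \<Rightarrow> bool" where
  "bounded_geometry TA TE \<longleftrightarrow>
     topological_manifold TA TE \<and> complete (UNIV::'a set) \<and> length_space TA \<and>
     (\<exists>C R0. C \<ge> 1 \<and> R0 > 0 \<and>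
        (\<forall>x::'a. \<exists>\<phi>::'a \<Rightarrow> 'e. \<phi> ` ball x R0 \<subseteq> ball 0 R0 \<and> bilipschitz_on C (ball x R0) \<phi>))"

definition LQ_map :: "real \<Rightarrow> ('a::metric_space \<Rightarrow> 'b::metric_space) \<Rightarrow> bool" where
  "LQ_map L f \<longleftrightarrow>
     (\<forall>x r. r > 0 \<longrightarrow> ball (f x) (r / L) \<subseteq> f ` ball x r \<and> f ` ball x r \<subseteq> ball (f x) (L * r))"

definition uniformly_k_to_one :: "real \<Rightarrow> nat \<Rightarrow> ('a::metric_space \<Rightarrow> 'b) \<Rightarrow> bool" where
  "uniformly_k_to_one R k f \<longleftrightarrow>
     (\<forall>x. finite (f -` {f x} \<inter> ball x R) \<and> card (f -` {f x} \<inter> ball x R) \<le> k)"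

definition locally_uniform_convergence ::
    "(nat \<Rightarrow> 'a::topological_space \<Rightarrow> 'b::metric_space) \<Rightarrow> ('a \<Rightarrow> 'b) \<Rightarrow> bool" where
  "locally_uniform_convergence fs f \<longleftrightarrow>
     (\<forall>x. \<exists>U. open U \<and> x \<in> U \<and> uniform_limit U fs f sequentially)"

end

theory Submission
  imports Defs
begin
lemma LQ_pos: assumes "LQ_map L g" shows "L > 0"
proof -
  fix x
  have "g x \<in> g ` ball x 1" by simp
  moreover have "g ` ball x 1 \<subseteq> ball (g x) (L * 1)"
    using assms[unfolded LQ_map_def, rule_format, of 1 x] by simp
  ultimately have "g x \<in> ball (g x) (L * 1)" by blast
  thus ?thesis by simp
qed

lemma LQ_lip: assumes "LQ_map L g" shows "dist (g a) (g b) \<le> L * dist a b"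
proof (rule field_le_epsilon)
  fix e :: real assume e: "e > 0"
  have L: "L > 0" using LQ_pos assms by blast
  have r: "dist a b + e / L > 0" using e L by (simp add: add_nonneg_pos)
  have "b \<in> ball a (dist a b + e / L)" using e L by (simp add: dist_commute)
  hence "g b \<in> g ` ball a (dist a b + e / L)" by blast
  also have "\<dots> \<subseteq> ball (g a) (L * (dist a b + e / L))"
    using assms[unfolded LQ_map_def, rule_format, OF r] by blast
  finally have "dist (g a) (g b) < L * (dist a b + e / L)" by simp
  also have "\<dots> = L * dist a b + e" using L by (simp add: field_simps)
  finally show "dist (g a) (g b) \<le> L * dist a b + e" by simp
qed

lemma luc_pointwise: assumes "locally_uniform_convergence fs f"
  shows "(\<lambda>j. fs j x) \<longlonglongrightarrow> f x"
proof -
  obtain U where "x \<in> U" "uniform_limit U fs f sequentially"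
    using assms unfolding locally_uniform_convergence_def by blast
  thus ?thesis by (intro tendsto_uniform_limitI)
qed

lemma lim_lip:
  assumes "\<And>j. LQ_map L (fs j)" "locally_uniform_convergence fs f"
  shows "dist (f a) (f b) \<le> L * dist a b"
proof -
  have "(\<lambda>j. dist (fs j a) (fs j b)) \<longlonglongrightarrow> dist (f a) (f b)"
    by (intro tendsto_dist luc_pointwise assms)
  moreover have "\<And>j. dist (fs j a) (fs j b) \<le> L * dist a b" by (rule LQ_lip[OF assms(1)])
  ultimately show ?thesis by (intro LIMSEQ_le_const2) auto
qed

lemma bg_subseq:
  assumes "bounded_geometry TYPE('a::metric_space) TYPE('e::euclidean_space)"
  shows "\<exists>\<rho>>0. \<forall>(x::'a) s (u::nat\<Rightarrow>'a). s < \<rho> \<longrightarrow> (\<forall>n. dist x (u n) \<le> s) \<longrightarrow>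
           (\<exists>l r. strict_mono r \<and> (u \<circ> r) \<longlonglongrightarrow> l \<and> dist x l \<le> s)"
proof -
  obtain C R0 where C: "C \<ge> 1" and R0: "R0 > 0" and
    ph: "\<forall>x::'a. \<exists>\<phi>::'a \<Rightarrow> 'e. \<phi> ` ball x R0 \<subseteq> ball 0 R0 \<and> bilipschitz_on C (ball x R0) \<phi>"
    and cpl: "complete (UNIV::'a set)"
    using assms unfolding bounded_geometry_def by blast
  show ?thesis
  proof (intro exI[of _ R0] conjI allI impI R0)
    fix x :: 'a and s and u :: "nat \<Rightarrow> 'a"
    assume s: "s < R0" and u: "\<forall>n. dist x (u n) \<le> s"
    obtain \<phi> :: "'a \<Rightarrow> 'e" where im: "\<phi> ` ball x R0 \<subseteq> ball 0 R0" and bl: "bilipschitz_on C (ball x R0) \<phi>"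
      using ph by blast
    have uin: "u n \<in> ball x R0" for n using u[rule_format, of n] s by simp
    have "range (\<phi> \<circ> u) \<subseteq> ball 0 R0" using uin im by auto
    hence "bounded (range (\<phi> \<circ> u))" using bounded_ball bounded_subset by blast
    then obtain l' r where r: "strict_mono r" and l': "((\<phi> \<circ> u) \<circ> r) \<longlonglongrightarrow> l'"
      by (meson bounded_imp_convergent_subsequence)
    have cph: "Cauchy ((\<phi> \<circ> u) \<circ> r)" using l' LIMSEQ_imp_Cauchy by blast
    have key: "dist (u a) (u b) \<le> C * dist (\<phi> (u a)) (\<phi> (u b))" for a b
    proof -
      have "dist (u a) (u b) / C \<le> dist (\<phi> (u a)) (\<phi> (u b))"
        using bl uin unfolding bilipschitz_on_def by blast
      thus ?thesis using C by (simp add: divide_le_eq mult.commute)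
    qed
    have "Cauchy (u \<circ> r)"
    proof (rule metric_CauchyI)
      fix e :: real assume e: "e > 0"
      then obtain M where M: "\<forall>m\<ge>M. \<forall>n\<ge>M. dist (((\<phi> \<circ> u) \<circ> r) m) (((\<phi> \<circ> u) \<circ> r) n) < e / C"
        using cph C e unfolding Cauchy_def by (meson divide_pos_pos less_le_trans zero_less_one)
      show "\<exists>M. \<forall>m\<ge>M. \<forall>n\<ge>M. dist ((u \<circ> r) m) ((u \<circ> r) n) < e"
      proof (intro exI allI impI)
        fix m n assume "m \<ge> M" "n \<ge> M"
        hence "dist (\<phi> (u (r m))) (\<phi> (u (r n))) < e / C" using M by simp
        hence "C * dist (\<phi> (u (r m))) (\<phi> (u (r n))) < e" using C by (simp add: pos_less_divide_eq mult.commute)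
        thus "dist ((u \<circ> r) m) ((u \<circ> r) n) < e" using key[of "r m" "r n"] by simp
      qed
    qed
    then obtain l where l: "(u \<circ> r) \<longlonglongrightarrow> l" using cpl unfolding complete_def by blast
    have "(\<lambda>n. dist x ((u \<circ> r) n)) \<longlonglongrightarrow> dist x l" by (intro tendsto_intros l)
    hence "dist x l \<le> s" by (rule LIMSEQ_le_const2) (use u in auto)
    thus "\<exists>l r. strict_mono r \<and> (u \<circ> r) \<longlonglongrightarrow> l \<and> dist x l \<le> s" using r l by blast
  qed
qed

lemma local_lift:
  fixes fs :: "nat \<Rightarrow> 'a::metric_space \<Rightarrow> 'b::metric_space"
  assumes LQ: "\<And>j. LQ_map L (fs j)" and luc: "locally_uniform_convergence fs f"
   and sub: "\<forall>(x::'a) s (u::nat\<Rightarrow>'a). s < \<rho> \<longrightarrow> (\<forall>n. dist x (u n) \<le> s) \<longrightarrow>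
           (\<exists>l r. strict_mono r \<and> (u \<circ> r) \<longlonglongrightarrow> l \<and> dist x l \<le> s)"
   and s: "0 < s" "s < \<rho>" and d: "dist z (f x) < s / L"
  shows "\<exists>y. dist x y < s \<and> f y = z"
proof -
  have L: "L > 0" using LQ_pos[OF LQ[of 0]] .
  define d where "d = dist z (f x)"
  define s' where "s' = (s + L*d)/2"
  have d0: "d \<ge> 0" unfolding d_def by simp
  have Ld: "L*d < s" using d L unfolding d_def by (simp add: pos_less_divide_eq mult.commute)
  have s1: "s' < s" "L*d < s'" using Ld unfolding s'_def by simp_all
  have s2: "0 < s'" using s1(2) L d0 by (smt (verit) mult_nonneg_nonneg)
  have e: "s'/L - d > 0" using s1(2) L by (simp add: pos_less_divide_eq mult.commute)
  have "eventually (\<lambda>j. dist (fs j x) (f x) < s'/L - d) sequentially"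
    using luc_pointwise[OF luc, of x] e by (rule tendstoD)
  then obtain N where N: "\<And>j. j \<ge> N \<Longrightarrow> dist (fs j x) (f x) < s'/L - d"
    unfolding eventually_sequentially by blast
  have ex: "\<exists>y. dist x y < s' \<and> fs j y = z" if "j \<ge> N" for j
  proof -
    have "dist (fs j x) z \<le> dist (fs j x) (f x) + dist (f x) z" by (rule dist_triangle)
    also have "dist (f x) z = d" unfolding d_def by (simp add: dist_commute)
    finally have "dist (fs j x) z < s'/L" using N[OF that] by simp
    hence "z \<in> ball (fs j x) (s'/L)" by simp
    also have "\<dots> \<subseteq> fs j ` ball x s'" using LQ[of j, unfolded LQ_map_def, rule_format, OF s2] by blast
    finally show ?thesis by auto
  qed
  define u where "u n = (SOME y. dist x y < s' \<and> fs (n+N) y = z)" for n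
  have u: "dist x (u n) < s' \<and> fs (n+N) (u n) = z" for n
    unfolding u_def by (rule someI_ex) (rule ex, simp)
  have "\<forall>n. dist x (u n) \<le> s'" using u less_imp_le by blast
  then obtain l r where r: "strict_mono r" and lim: "(u \<circ> r) \<longlonglongrightarrow> l" and dl: "dist x l \<le> s'"
    using sub s1 s by (meson less_trans)
  have sm: "strict_mono (\<lambda>n. r n + N)" using r by (simp add: strict_mono_def)
  have A: "(\<lambda>n. fs (r n + N) l) \<longlonglongrightarrow> f l"
    using LIMSEQ_subseq_LIMSEQ[OF luc_pointwise[OF luc, of l] sm] by (simp add: o_def)
  have B: "(\<lambda>n. dist (fs (r n + N) l) (f l) + L * dist l (u (r n))) \<longlonglongrightarrow> dist (f l) (f l) + L * dist l l"
    using lim by (intro tendsto_intros A) (simp add: o_def)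
  have C: "dist (f l) z \<le> dist (fs (r n + N) l) (f l) + L * dist l (u (r n))" for n
  proof -
    have z: "z = fs (r n + N) (u (r n))" using u[of "r n"] by simp
    have "dist (f l) z \<le> dist (f l) (fs (r n + N) l) + dist (fs (r n + N) l) z" by (rule dist_triangle)
    also have "dist (fs (r n + N) l) z \<le> L * dist l (u (r n))" unfolding z by (rule LQ_lip[OF LQ])
    finally show ?thesis by (simp add: dist_commute)
  qed
  have "dist (f l) z \<le> dist (f l) (f l) + L * dist l l" using B C by (intro LIMSEQ_le_const[OF B]) auto
  hence "dist (f l) z \<le> 0" by simp
  hence "f l = z" by simp
  moreover have "dist x l < s" using dl s1 by simp
  ultimately show ?thesis by blast
qed


lemma global_lift:
  fixes fs :: "nat \<Rightarrow> 'a::metric_space \<Rightarrow> 'b::metric_space"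
  assumes LQ: "\<And>j. LQ_map L (fs j)" and luc: "locally_uniform_convergence fs f"
   and sub: "\<forall>(x::'a) s (u::nat\<Rightarrow>'a). s < \<rho> \<longrightarrow> (\<forall>n. dist x (u n) \<le> s) \<longrightarrow>
           (\<exists>l r. strict_mono r \<and> (u \<circ> r) \<longlonglongrightarrow> l \<and> dist x l \<le> s)"
   and rho: "\<rho> > 0" and ls: "length_space TYPE('b)" and r: "r > 0" and d: "dist (f x) z < r / L"
  shows "\<exists>y. dist x y < r \<and> f y = z"
proof -
  have L: "L > 0" using LQ_pos[OF LQ[of 0]] .
  have eq: "ereal (dist (f x) z) = (INF \<gamma> \<in> {\<gamma>. continuous_on {0..1} \<gamma> \<and> \<gamma> 0 = f x \<and> \<gamma> 1 = z}. curve_length \<gamma>)"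
    using ls unfolding length_space_def by blast
  have "ereal (dist (f x) z) < ereal (r/L)" using d by simp
  hence "(INF \<gamma> \<in> {\<gamma>. continuous_on {0..1} \<gamma> \<and> \<gamma> 0 = f x \<and> \<gamma> 1 = z}. curve_length \<gamma>) < ereal (r/L)"
    by (simp only: eq)
  then obtain \<gamma> where \<gamma>c: "continuous_on {0..1} \<gamma>" and \<gamma>0: "\<gamma> 0 = f x" and \<gamma>1: "\<gamma> 1 = z"
    and \<gamma>l: "curve_length \<gamma> < ereal (r/L)" unfolding INF_less_iff by blast
  define \<rho>' where "\<rho>' = \<rho>/2"
  have \<rho>': "\<rho>' > 0" "\<rho>' < \<rho>" using rho unfolding \<rho>'_def by simp_all
  have pos: "\<rho>'/L > 0" using \<rho>' L by simp
  have "uniformly_continuous_on {0..1} \<gamma>" using compact_uniformly_continuous[OF \<gamma>c compact_Icc] .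
  hence uc: "\<forall>e>0. \<exists>d>0. \<forall>x\<in>{0..1}. \<forall>x'\<in>{0..1}. dist x' x < d \<longrightarrow> dist (\<gamma> x') (\<gamma> x) < e"
    unfolding uniformly_continuous_on_def .
  obtain \<delta> where \<delta>: "\<delta> > 0" and \<delta>': "\<forall>a\<in>{0..1}. \<forall>b\<in>{0..1}. dist b a < \<delta> \<longrightarrow> dist (\<gamma> b) (\<gamma> a) < \<rho>'/L"
    using uc[rule_format, OF pos] by blast
  obtain m :: nat where m: "1 / \<delta> < real m" using reals_Archimedean2 by blast
  have m0: "m > 0" using m \<delta> by (smt (verit) divide_pos_pos of_nat_0 neq0_conv)
  have m\<delta>: "1 / real m < \<delta>" using m \<delta> m0 by (simp add: divide_less_eq mult.commute)
  define t where "t i = real i / real m" for i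
  define w where "w i = \<gamma> (t i)" for i
  define S where "S = (\<Sum>i<m. dist (w i) (w (Suc i)))"
  have mem: "(m, t) \<in> {(m, t). t 0 = (0::real) \<and> t m = 1 \<and> (\<forall>i<m. t i \<le> t (Suc i))}"
    using m0 unfolding t_def by (simp add: divide_right_mono)
  have "ereal S \<le> curve_length \<gamma>" unfolding curve_length_def S_def w_def
    using SUP_upper[OF mem, of "\<lambda>p. ereal (\<Sum>i<fst p. dist (\<gamma> (snd p i)) (\<gamma> (snd p (Suc i))))"] by simp
  hence "ereal S < ereal (r/L)" using \<gamma>l by (rule le_less_trans)
  hence SL: "L * S < r" using L by (simp add: less_divide_eq mult.commute)
  define \<epsilon> where "\<epsilon> = (r - L*S)/(real m + 1)"
  have \<epsilon>: "\<epsilon> > 0" unfolding \<epsilon>_def using SL by simp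
  have steps: "dist (w i) (w (Suc i)) < \<rho>'/L" if "i < m" for i
  proof -
    have ti: "t i \<in> {0..1}" "t (Suc i) \<in> {0..1}" using that m0 unfolding t_def by auto
    have "dist (t (Suc i)) (t i) = 1 / real m" unfolding t_def dist_real_def using m0
      by (simp add: diff_divide_distrib[symmetric])
    hence "dist (t (Suc i)) (t i) < \<delta>" using m\<delta> by simp
    hence "dist (\<gamma> (t (Suc i))) (\<gamma> (t i)) < \<rho>'/L" using \<delta>' ti by blast
    thus ?thesis unfolding w_def by (simp add: dist_commute)
  qed
  have ind: "i \<le> m \<Longrightarrow> \<exists>y. f y = w i \<and> dist x y \<le> L * (\<Sum>l<i. dist (w l) (w (Suc l))) + real i * \<epsilon>" for i
  proof (induction i)
    case 0
    then show ?case using \<gamma>0 unfolding w_def t_def by (intro exI[of _ x]) simp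
  next
    case (Suc i)
    then obtain y where y: "f y = w i" and dy: "dist x y \<le> L * (\<Sum>l<i. dist (w l) (w (Suc l))) + real i * \<epsilon>"
      by auto
    define di where "di = dist (w i) (w (Suc i))"
    define s where "s = min \<rho>' (L*di + \<epsilon>)"
    have di: "di < \<rho>'/L" "di \<ge> 0" using steps[of i] Suc.prems unfolding di_def by simp_all
    have s0: "s > 0" unfolding s_def using \<rho>' \<epsilon> di L by (simp add: add_nonneg_pos)
    have s1: "s < \<rho>" unfolding s_def using \<rho>' by simp
    have "di < s / L"
    proof (cases "\<rho>' \<le> L*di + \<epsilon>")
      case True
      then show ?thesis unfolding s_def using di by simp
    next
      case False
      then have "s = L*di + \<epsilon>" unfolding s_def by simp
      then show ?thesis using L \<epsilon> by (simp add: less_divide_eq)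
    qed
    hence "dist (w (Suc i)) (f y) < s / L" unfolding y di_def by (simp add: dist_commute)
    then obtain y' where y': "dist y y' < s" "f y' = w (Suc i)"
      using local_lift[OF LQ luc sub s0 s1] by blast
    have "dist x y' \<le> dist x y + dist y y'" by (rule dist_triangle)
    also have "\<dots> \<le> L * (\<Sum>l<i. dist (w l) (w (Suc l))) + real i * \<epsilon> + (L*di + \<epsilon>)"
      using dy y'(1) unfolding s_def by simp
    also have "\<dots> = L * (\<Sum>l<Suc i. dist (w l) (w (Suc l))) + real (Suc i) * \<epsilon>"
      unfolding di_def by (simp add: algebra_simps)
    finally show ?case using y'(2) by blast
  qed
  obtain y where y: "f y = w m" and dy: "dist x y \<le> L * S + real m * \<epsilon>" using ind[of m] unfolding S_def by auto
  have "L * S + real m * \<epsilon> < L * S + (real m + 1) * \<epsilon>" using \<epsilon> by simp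
  also have "\<dots> = r" unfolding \<epsilon>_def by simp
  finally have "dist x y < r" using dy by simp
  moreover have "f y = z" using y \<gamma>1 m0 unfolding w_def t_def by simp
  ultimately show ?thesis by blast
qed


lemma finite_pos_lower:
  fixes X :: "real set"
  assumes "finite X" "\<forall>v\<in>X. v > 0"
  shows "\<exists>e>0. \<forall>v\<in>X. e \<le> v"
proof -
  have "Min (insert 1 X) > 0" using assms by simp
  moreover have "\<forall>v\<in>X. Min (insert 1 X) \<le> v" using assms by simp
  ultimately show ?thesis by blast
qed

lemma kto1:
  fixes fs :: "nat \<Rightarrow> 'a::metric_space \<Rightarrow> 'b::metric_space"
  assumes LQ: "\<And>j. LQ_map L (fs j)" and luc: "locally_uniform_convergence fs f"
   and kk: "\<And>j. uniformly_k_to_one R k (fs j)"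
  shows "uniformly_k_to_one R k f"
  unfolding uniformly_k_to_one_def
proof
  fix x
  define A where "A = f -` {f x} \<inter> ball x R"
  have L: "L > 0" using LQ_pos[OF LQ[of 0]] .
  have bound: "card F \<le> k" if FA: "F \<subseteq> A" and Ff: "finite F" for F
  proof (cases "F = {}")
    case True then show ?thesis by simp
  next
    case False
    then obtain y0 where "y0 \<in> F" by blast
    hence R: "R > 0" using FA unfolding A_def by (smt (verit) IntD2 mem_ball subsetD zero_le_dist)
    define P where "P = insert x F"
    have Pf: "finite P" using Ff unfolding P_def by simp
    have PA: "\<forall>y\<in>P. f y = f x \<and> dist x y < R" using FA R unfolding P_def A_def by auto
    define X where "X = (\<lambda>(a,b). dist a b) ` {p \<in> P \<times> P. fst p \<noteq> snd p} \<union> (\<lambda>y. R - dist x y) ` P"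
    have Xf: "finite X" unfolding X_def using Pf by simp
    have Xp: "\<forall>v\<in>X. v > 0" unfolding X_def using PA by auto
    obtain e where e: "e > 0" and eX: "\<forall>v\<in>X. e \<le> v" using finite_pos_lower[OF Xf Xp] by blast
    define \<epsilon> where "\<epsilon> = e / 3"
    have \<epsilon>: "\<epsilon> > 0" unfolding \<epsilon>_def using e by simp
    have sep: "3 * \<epsilon> \<le> dist a b" if "a \<in> P" "b \<in> P" "a \<noteq> b" for a b
    proof -
      have "dist a b \<in> X" unfolding X_def using that by (auto intro!: image_eqI[of _ _ "(a,b)"])
      thus ?thesis using eX unfolding \<epsilon>_def by simp
    qed
    have inb: "dist x y + 3 * \<epsilon> \<le> R" if "y \<in> P" for y
    proof -
      have "R - dist x y \<in> X" unfolding X_def using that by auto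
      thus ?thesis using eX unfolding \<epsilon>_def by fastforce
    qed
    have ev: "\<forall>y\<in>P. eventually (\<lambda>j. dist (fs j y) (f y) < \<epsilon> / L) sequentially"
      using luc_pointwise[OF luc] \<epsilon> L by (auto intro: tendstoD)
    have "eventually (\<lambda>j. \<forall>y\<in>P. dist (fs j y) (f y) < \<epsilon> / L) sequentially"
      using eventually_ball_finite[OF Pf ev] .
    then obtain N where N: "\<forall>y\<in>P. dist (fs N y) (f y) < \<epsilon> / L"
      unfolding eventually_sequentially by blast
    have "\<forall>y\<in>P. \<exists>g. dist y g < \<epsilon> \<and> fs N g = f x"
    proof
      fix y assume yP: "y \<in> P"
      have "dist (fs N y) (f x) < \<epsilon> / L" using N yP PA by metis
      hence "f x \<in> ball (fs N y) (\<epsilon> / L)" by simp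
      also have "\<dots> \<subseteq> fs N ` ball y \<epsilon>" using LQ[of N, unfolded LQ_map_def, rule_format, OF \<epsilon>] by blast
      finally show "\<exists>g. dist y g < \<epsilon> \<and> fs N g = f x" by auto
    qed
    then obtain g where g: "\<And>y. y \<in> P \<Longrightarrow> dist y (g y) < \<epsilon> \<and> fs N (g y) = f x" by metis
    define x' where "x' = g x"
    have xP: "x \<in> P" unfolding P_def by simp
    define B where "B = fs N -` {fs N x'} \<inter> ball x' R"
    have Bf: "finite B" and Bk: "card B \<le> k" using kk[of N] unfolding uniformly_k_to_one_def B_def by auto
    have gFB: "g ` F \<subseteq> B"
    proof
      fix v assume "v \<in> g ` F"
      then obtain y where yF: "y \<in> F" and v: "v = g y" by blast
      have yP: "y \<in> P" using yF unfolding P_def by simp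
      have "dist x' v \<le> dist x' x + dist x v" by (rule dist_triangle)
      also have "dist x v \<le> dist x y + dist y v" by (rule dist_triangle)
      finally have "dist x' v \<le> dist x' x + dist x y + dist y v" by simp
      moreover have "dist x' x < \<epsilon>" using g[OF xP] unfolding x'_def by (simp add: dist_commute)
      moreover have "dist y v < \<epsilon>" using g[OF yP] v by simp
      moreover have "dist x y + 3 * \<epsilon> \<le> R" using inb[OF yP] .
      ultimately have "dist x' v < R" using \<epsilon> by linarith
      moreover have "fs N v = fs N x'" using g[OF yP] g[OF xP] v unfolding x'_def by simp
      ultimately show "v \<in> B" unfolding B_def by simp
    qed
    have inj: "inj_on g F"
    proof (rule inj_onI)
      fix a b assume aF: "a \<in> F" and bF: "b \<in> F" and gab: "g a = g b"
      have aP: "a \<in> P" and bP: "b \<in> P" using aF bF unfolding P_def by auto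
      show "a = b"
      proof (rule ccontr)
        assume "a \<noteq> b"
        hence "3 * \<epsilon> \<le> dist a b" using sep aP bP by blast
        moreover have "dist a b \<le> dist a (g a) + dist (g a) b" by (rule dist_triangle)
        moreover have "dist (g a) b = dist b (g b)" using gab by (simp add: dist_commute)
        moreover have "dist a (g a) < \<epsilon>" "dist b (g b) < \<epsilon>" using g aP bP by auto
        ultimately show False using \<epsilon> by linarith
      qed
    qed
    have "card F = card (g ` F)" using inj by (simp add: card_image)
    also have "\<dots> \<le> card B" using card_mono[OF Bf gFB] by assumption
    finally have "card F \<le> card B" .
    thus ?thesis using Bk by linarith
  qed
  have finA: "finite A"
  proof (rule ccontr)
    assume "\<not> finite A"
    then obtain F where "finite F" "card F = Suc k" "F \<subseteq> A" using infinite_arbitrarily_large by blast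
    thus False using bound[of F] by simp
  qed
  show "finite (f -` {f x} \<inter> ball x R) \<and> card (f -` {f x} \<inter> ball x R) \<le> k"
    unfolding A_def[symmetric] using finA bound[OF order_refl finA] by blast
qed


theorem theorem1p2:
  fixes fs :: "nat \<Rightarrow> 'a::metric_space \<Rightarrow> 'b::metric_space"
    and f :: "'a \<Rightarrow> 'b"
    and R L :: real and k :: nat
  assumes "bounded_geometry TYPE('a) TYPE('e::euclidean_space)"
    and "bounded_geometry TYPE('b) TYPE('e)"
    and "\<And>j. uniformly_k_to_one R k (fs j)"
    and "\<And>j. LQ_map L (fs j)"
    and "locally_uniform_convergence fs f"
    and "continuous_on UNIV f"
  shows "uniformly_k_to_one R k f \<and> LQ_map L f"
proof
  show "uniformly_k_to_one R k f" by (rule kto1[OF assms(4) assms(5) assms(3)])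
  obtain \<rho> where rho: "\<rho> > 0" and sub: "\<forall>(x::'a) s (u::nat\<Rightarrow>'a). s < \<rho> \<longrightarrow> (\<forall>n. dist x (u n) \<le> s) \<longrightarrow>
           (\<exists>l r. strict_mono r \<and> (u \<circ> r) \<longlonglongrightarrow> l \<and> dist x l \<le> s)"
    using bg_subseq[OF assms(1)] by blast
  have ls: "length_space TYPE('b)" using assms(2) unfolding bounded_geometry_def by blast
  have L: "L > 0" using LQ_pos[OF assms(4)[of 0]] .
  show "LQ_map L f"
    unfolding LQ_map_def
  proof (intro allI impI conjI subsetI)
    fix x r and z assume r: "(r::real) > 0" and z: "z \<in> ball (f x) (r / L)"
    hence "dist (f x) z < r / L" by simp
    then obtain y where "dist x y < r" "f y = z"
      using global_lift[OF assms(4) assms(5) sub rho ls r] by blast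
    thus "z \<in> f ` ball x r" by auto
  next
    fix x r and v assume r: "(r::real) > 0" and v: "v \<in> f ` ball x r"
    then obtain y where y: "dist x y < r" and vy: "v = f y" by auto
    have "dist (f x) (f y) \<le> L * dist x y" by (rule lim_lip[OF assms(4) assms(5)])
    also have "\<dots> < L * r" using y L by simp
    finally show "v \<in> ball (f x) (L * r)" unfolding vy by simp
  qed
qed

end
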